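(* Let $0<\underline\theta\le\bar\theta<\infty$. There exists a constant $C>0$ depending only on $\nu,\underline\theta,\bar\theta$ such that for all $\delta\in(0,1]$, all $\theta\in[\underline\theta,\bar\theta]$ and all $\lambda\in[-\pi,\pi]$: $$C^{-1}\delta^{2\nu}\le g^*_{\nu,\delta\theta}(\lambda)\le g^\delta_{\nu,\theta}(\lambda)\le g^*_{\nu,\delta\theta}(\lambda)+C\delta^{2\nu},$$ and $$g^*_{\nu,\delta\theta}(\lambda)\,\big|h^\delta_{\nu,\theta}(\lambda)-\delta\,h^*_{\nu,\delta\theta}(\lambda)\big|\le C\delta^{2\nu}.$$
   Context: Fix $\nu\ge1/2$. For $\alpha>0$, $\omega\in\mathbb R$ let $g^*_{\nu,\alpha}(\omega)=C_\nu\alpha^{2\nu}(\alpha^2+\omega^2)^{-(\nu+1/2)}$ with $C_\nu=\Gamma(\nu+\frac12)/(\sqrt\pi\,\Gamma(\nu))$, and $h^*_{\nu,\alpha}=\partial\log g^*_{\nu,\alpha}/\partial\alpha$. For $\delta,\theta>0$ and $\lambda\in[-\pi,\pi]$ let $g^\delta_{\nu,\theta}(\lambda)=\sum_{k\in\mathbb Z}g^*_{\nu,\delta\theta}(\lambda+2k\pi)$ and $h^\delta_{\nu,\theta}=\partial\log g^\delta_{\nu,\theta}/\partial\theta$. *)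

theory Defs
  imports "HOL-Analysis.Analysis"
begin

definition C_nu :: "real \<Rightarrow> real" where
  "C_nu \<nu> = Gamma (\<nu> + 1/2) / (sqrt pi * Gamma \<nu>)"

definition gstar :: "real \<Rightarrow> real \<Rightarrow> real \<Rightarrow> real" where
  "gstar \<nu> \<alpha> \<omega> = C_nu \<nu> * \<alpha> powr (2 * \<nu>) * (\<alpha>\<^sup>2 + \<omega>\<^sup>2) powr (-(\<nu> + 1/2))"

definition hstar :: "real \<Rightarrow> real \<Rightarrow> real \<Rightarrow> real" where
  "hstar \<nu> \<alpha> \<omega> = deriv (\<lambda>a. ln (gstar \<nu> a \<omega>)) \<alpha>"

definition gdelta :: "real \<Rightarrow> real \<Rightarrow> real \<Rightarrow> real \<Rightarrow> real" where
  "gdelta \<nu> \<delta> \<theta> l = (\<Sum>\<^sub>\<infinity>k::int. gstar \<nu> (\<delta> * \<theta>) (l + 2 * of_int k * pi))"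

definition hdelta :: "real \<Rightarrow> real \<Rightarrow> real \<Rightarrow> real \<Rightarrow> real" where
  "hdelta \<nu> \<delta> \<theta> l = deriv (\<lambda>t. ln (gdelta \<nu> \<delta> t l)) \<theta>"

end

theory Submission
  imports Defs
begin


definition hs :: "real \<Rightarrow> real \<Rightarrow> real \<Rightarrow> real" where
  "hs \<nu> \<alpha> \<omega> = 2*\<nu>/\<alpha> - (2*\<nu>+1)*\<alpha>/(\<alpha>\<^sup>2+\<omega>\<^sup>2)"

lemma Cnu_pos: "\<nu> > 0 \<Longrightarrow> C_nu \<nu> > 0"
  unfolding C_nu_def by (auto intro!: divide_pos_pos mult_pos_pos)

lemma gstar_pos: "\<nu> > 0 \<Longrightarrow> \<alpha> > 0 \<Longrightarrow> gstar \<nu> \<alpha> \<omega> > 0"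
  unfolding gstar_def using Cnu_pos[of \<nu>]
  by (auto intro!: mult_pos_pos simp: add_pos_nonneg)

lemma gstar_deriv:
  assumes "\<nu> > 0" "\<alpha> > 0"
  shows "((\<lambda>a. gstar \<nu> a \<omega>) has_real_derivative gstar \<nu> \<alpha> \<omega> * hs \<nu> \<alpha> \<omega>) (at \<alpha>)"
proof -
  have p: "\<alpha>\<^sup>2 + \<omega>\<^sup>2 > 0" using assms by (simp add: add_pos_nonneg)
  have "((\<lambda>a. C_nu \<nu> * a powr (2 * \<nu>) * (a\<^sup>2 + \<omega>\<^sup>2) powr (-(\<nu> + 1/2))) has_real_derivative
     C_nu \<nu> * ((2*\<nu>) * \<alpha> powr (2*\<nu> - 1)) * (\<alpha>\<^sup>2 + \<omega>\<^sup>2) powr (-(\<nu> + 1/2))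
     + C_nu \<nu> * \<alpha> powr (2 * \<nu>) * ((-(\<nu> + 1/2)) * (\<alpha>\<^sup>2 + \<omega>\<^sup>2) powr (-(\<nu> + 1/2) - 1) * (2*\<alpha>))) (at \<alpha>)"
    using assms p
    by (auto intro!: derivative_eq_intros DERIV_fun_powr[where r="-(\<nu> + 1/2)", simplified])
  moreover have "C_nu \<nu> * ((2*\<nu>) * \<alpha> powr (2*\<nu> - 1)) * (\<alpha>\<^sup>2 + \<omega>\<^sup>2) powr (-(\<nu> + 1/2))
     + C_nu \<nu> * \<alpha> powr (2 * \<nu>) * ((-(\<nu> + 1/2)) * (\<alpha>\<^sup>2 + \<omega>\<^sup>2) powr (-(\<nu> + 1/2) - 1) * (2*\<alpha>))
     = gstar \<nu> \<alpha> \<omega> * hs \<nu> \<alpha> \<omega>"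
  proof -
    have e1: "\<alpha> powr (2*\<nu> - 1) = \<alpha> powr (2*\<nu>) / \<alpha>" using assms by (simp add: powr_diff)
    have e2: "(\<alpha>\<^sup>2 + \<omega>\<^sup>2) powr (-(\<nu> + 1/2) - 1) = (\<alpha>\<^sup>2 + \<omega>\<^sup>2) powr (-(\<nu> + 1/2)) / (\<alpha>\<^sup>2 + \<omega>\<^sup>2)"
      using p by (subst powr_diff) auto
    have alg: "C*(2*\<nu>*(P/\<alpha>))*Q + C*P*(-(\<nu>+1/2)*(Q/X)*(2*\<alpha>)) = C*P*Q*(2*\<nu>/\<alpha> - (2*\<nu>+1)*\<alpha>/X)"
      if "X > 0" for C P Q X :: real
      using that assms by (simp add: field_simps)
    show ?thesis unfolding e1 e2 gstar_def hs_def
      by (rule alg[OF p])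
  qed
  ultimately show ?thesis unfolding gstar_def by simp
qed

lemma hstar_eq:
  assumes "\<nu> > 0" "\<alpha> > 0"
  shows "hstar \<nu> \<alpha> \<omega> = hs \<nu> \<alpha> \<omega>"
proof -
  have "((\<lambda>a. ln (gstar \<nu> a \<omega>)) has_real_derivative (gstar \<nu> \<alpha> \<omega> * hs \<nu> \<alpha> \<omega>) / gstar \<nu> \<alpha> \<omega>) (at \<alpha>)"
    using gstar_deriv[OF assms] gstar_pos[OF assms]
    by (auto intro!: derivative_eq_intros)
  then show ?thesis unfolding hstar_def using gstar_pos[OF assms, of \<omega>]
    by (auto dest!: DERIV_imp_deriv)
qed

lemma hs_bound:
  assumes "\<nu> \<ge> 0" "\<alpha> > 0"
  shows "\<bar>hs \<nu> \<alpha> \<omega>\<bar> \<le> (4*\<nu>+1)/\<alpha>"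
proof -
  have p: "\<alpha>\<^sup>2 + \<omega>\<^sup>2 > 0" using assms by (simp add: add_pos_nonneg)
  have "\<alpha>/(\<alpha>\<^sup>2+\<omega>\<^sup>2) \<le> 1/\<alpha>" using assms p by (simp add: field_simps power2_eq_square)
  hence "(2*\<nu>+1)*\<alpha>/(\<alpha>\<^sup>2+\<omega>\<^sup>2) \<le> (2*\<nu>+1)/\<alpha>" using assms
    by (metis mult_left_mono times_divide_eq_right add_nonneg_nonneg zero_le_one mult_nonneg_nonneg zero_le_numeral mult.right_neutral)
  moreover have "0 \<le> (2*\<nu>+1)*\<alpha>/(\<alpha>\<^sup>2+\<omega>\<^sup>2)" using assms p by simp
  moreover have "0 \<le> 2*\<nu>/\<alpha>" using assms by simp
  ultimately have "\<bar>hs \<nu> \<alpha> \<omega>\<bar> \<le> 2*\<nu>/\<alpha> + (2*\<nu>+1)/\<alpha>" unfolding hs_def by linarith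
  also have "\<dots> = (4*\<nu>+1)/\<alpha>" by (simp only: add_divide_distrib[symmetric]) simp
  finally show ?thesis .
qed




lemma int_split:
  fixes f :: "int \<Rightarrow> real"
  assumes nn: "\<And>k. f k \<ge> 0" and sm: "summable (\<lambda>n. f (int (Suc n)) + f (- int (Suc n)))"
  shows "(f has_sum (f 0 + (\<Sum>n. f (int (Suc n)) + f (- int (Suc n))))) UNIV"
proof -
  have s1: "summable (\<lambda>n. f (int (Suc n)))"
    by (rule summable_comparison_test'[OF sm, of 0]) (use nn in \<open>auto intro: add_increasing2\<close>)
  have s2: "summable (\<lambda>n. f (- int (Suc n)))"
    by (rule summable_comparison_test'[OF sm, of 0]) (use nn in \<open>auto intro: add_increasing\<close>)
  have h1: "((\<lambda>n. f (int (Suc n))) has_sum (\<Sum>n. f (int (Suc n)))) UNIV"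
    using s1 nn by (intro sums_nonneg_imp_has_sum summable_sums) auto
  have h2: "((\<lambda>n. f (- int (Suc n))) has_sum (\<Sum>n. f (- int (Suc n)))) UNIV"
    using s2 nn by (intro sums_nonneg_imp_has_sum summable_sums) auto
  have i1: "inj_on (\<lambda>n. int (Suc n)) UNIV" by (auto simp: inj_on_def)
  have i2: "inj_on (\<lambda>n. - int (Suc n)) UNIV" by (auto simp: inj_on_def)
  have im1: "(\<lambda>n. int (Suc n)) ` UNIV = {k. k > 0}"
  proof -
    have "\<exists>n. k = 1 + int n" if "k > 0" for k :: int using that by (intro exI[of _ "nat (k - 1)"]) simp
    then show ?thesis by (auto simp: image_iff)
  qed
  have im2: "(\<lambda>n. - int (Suc n)) ` UNIV = {k. k < 0}"
  proof -
    have "\<exists>n. k = - 1 - int n" if "k < 0" for k :: int using that by (intro exI[of _ "nat (- k - 1)"]) simp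
    then show ?thesis by (auto simp: image_iff)
  qed
  have H1: "(f has_sum (\<Sum>n. f (int (Suc n)))) {k. k > 0}"
    using has_sum_reindex[OF i1, of f] h1 im1 by (simp add: comp_def)
  have H2: "(f has_sum (\<Sum>n. f (- int (Suc n)))) {k. k < 0}"
    using has_sum_reindex[OF i2, of f] h2 im2 by (simp add: comp_def)
  have H0: "(f has_sum f 0) {0}" using has_sum_finite[of "{0::int}" f] by simp
  have "(f has_sum (f 0 + ((\<Sum>n. f (int (Suc n))) + (\<Sum>n. f (- int (Suc n)))))) ({0} \<union> ({k. k > 0} \<union> {k. k < 0}))"
    by (intro has_sum_Un_disjoint H0 H1 H2) auto
  moreover have "{0} \<union> ({k. k > 0} \<union> {k::int. k < 0}) = UNIV" by auto
  moreover have "(\<Sum>n. f (int (Suc n))) + (\<Sum>n. f (- int (Suc n))) = (\<Sum>n. f (int (Suc n)) + f (- int (Suc n)))"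
    using suminf_add[OF s1 s2] by simp
  ultimately show ?thesis by simp
qed




lemma gstar_nonneg: "\<nu> > 0 \<Longrightarrow> \<alpha> > 0 \<Longrightarrow> gstar \<nu> \<alpha> \<omega> \<ge> 0"
  using gstar_pos[of \<nu> \<alpha> \<omega>] by simp

lemma decay:
  fixes k :: int
  assumes "\<nu> \<ge> 1/2" "\<alpha> > 0" "\<bar>l\<bar> \<le> pi" "k \<noteq> 0"
  shows "gstar \<nu> \<alpha> (l + 2 * of_int k * pi) \<le> C_nu \<nu> * \<alpha> powr (2*\<nu>) / (of_int k)\<^sup>2"
proof -
  define w where "w = l + 2 * of_int k * pi"
  have k1: "\<bar>real_of_int k\<bar> \<ge> 1" using assms(4) by linarith
  have "\<bar>2 * of_int k * pi\<bar> = 2 * \<bar>of_int k\<bar> * pi" by (simp add: abs_mult)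
  hence "\<bar>w\<bar> \<ge> 2 * \<bar>of_int k\<bar> * pi - pi" unfolding w_def using assms(3) by linarith
  moreover have "2 * \<bar>real_of_int k\<bar> * pi - pi \<ge> \<bar>of_int k\<bar> * pi" using mult_right_mono[OF k1, of pi] by simp
  moreover have "\<bar>real_of_int k\<bar> * pi \<ge> \<bar>of_int k\<bar>" using mult_left_mono[of 1 pi "\<bar>real_of_int k\<bar>"] pi_gt3 by simp
  ultimately have wk: "\<bar>w\<bar> \<ge> \<bar>of_int k\<bar>" by linarith
  have "w\<^sup>2 \<ge> (of_int k)\<^sup>2" using wk k1
    by (metis abs_ge_zero power2_abs power_mono)
  define X where "X = \<alpha>\<^sup>2 + w\<^sup>2"
  have kk: "(real_of_int k)\<^sup>2 \<ge> 1" using power_mono[OF k1, of 2] by simp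
  have Xk: "X \<ge> (of_int k)\<^sup>2" unfolding X_def using \<open>w\<^sup>2 \<ge> _\<close> zero_le_power2[of \<alpha>] by linarith
  have X1: "X \<ge> 1" using Xk kk by linarith
  have "X powr (-(\<nu>+1/2)) \<le> X powr (-1)" using X1 assms(1) by (intro powr_mono) auto
  also have "\<dots> = 1 / X" using X1 by (simp add: powr_minus_divide)
  also have "\<dots> \<le> 1 / (of_int k)\<^sup>2" using Xk kk by (intro divide_left_mono mult_pos_pos) auto
  finally have "X powr (-(\<nu>+1/2)) \<le> 1 / (of_int k)\<^sup>2" .
  hence "C_nu \<nu> * \<alpha> powr (2*\<nu>) * X powr (-(\<nu>+1/2)) \<le> C_nu \<nu> * \<alpha> powr (2*\<nu>) * (1 / (of_int k)\<^sup>2)"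
    using Cnu_pos[of \<nu>] assms(1) by (intro mult_left_mono) auto
  thus ?thesis unfolding gstar_def X_def w_def by simp
qed

lemma fin_alg:
  fixes x R R' p q :: real
  assumes "x > 0" "R \<ge> 0" "\<bar>p\<bar> \<le> q" "\<bar>R'\<bar> \<le> q * R"
  shows "x * \<bar>(x*p + R')/(x+R) - p\<bar> \<le> 2*q*R"
proof -
  have xR: "x + R > 0" using assms by simp
  have "(x*p + R')/(x+R) - p = (R' - p*R)/(x+R)" using xR by (simp add: field_simps)
  hence "x * \<bar>(x*p + R')/(x+R) - p\<bar> = (x/(x+R)) * \<bar>R' - p*R\<bar>" using xR by (simp add: abs_div)
  also have "\<dots> \<le> 1 * \<bar>R' - p*R\<bar>" using assms xR by (intro mult_right_mono) auto
  also have "\<dots> \<le> \<bar>R'\<bar> + \<bar>p\<bar>*R" using assms by (simp add: abs_mult abs_triangle_ineq4[THEN order_trans])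
  also have "\<dots> \<le> q*R + q*R" using assms by (intro add_mono mult_right_mono) auto
  finally show ?thesis by (simp add: algebra_simps)
qed




lemma point:
  fixes \<nu> \<delta> \<theta>lo \<theta>hi \<theta> l :: real
  assumes nu: "\<nu> \<ge> 1/2" and d: "0 < \<delta>" and lo: "0 < \<theta>lo" "\<theta>lo \<le> \<theta>" "\<theta> \<le> \<theta>hi"
    and l: "\<bar>l\<bar> \<le> pi"
  shows "gstar \<nu> (\<delta>*\<theta>) l \<le> gdelta \<nu> \<delta> \<theta> l
     \<and> gdelta \<nu> \<delta> \<theta> l \<le> gstar \<nu> (\<delta>*\<theta>) l + (2 * C_nu \<nu> * \<theta>hi powr (2*\<nu>) * (\<Sum>n. inverse (real (Suc n) ^ 2))) * \<delta> powr (2*\<nu>)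
     \<and> gstar \<nu> (\<delta>*\<theta>) l * \<bar>hdelta \<nu> \<delta> \<theta> l - \<delta> * hstar \<nu> (\<delta>*\<theta>) l\<bar>
        \<le> 2*((4*\<nu>+1)/\<theta>lo) * (2 * C_nu \<nu> * \<theta>hi powr (2*\<nu>) * (\<Sum>n. inverse (real (Suc n) ^ 2))) * \<delta> powr (2*\<nu>)"
proof -
  have nu0: "\<nu> > 0" using nu by simp
  have th0: "\<theta> > 0" using lo by simp
  have Cp: "C_nu \<nu> > 0" using Cnu_pos[OF nu0] .
  define w where "w k = l + 2 * of_int k * pi" for k :: int
  define a where "a k t = gstar \<nu> (\<delta>*t) (w k)" for k t
  define b where "b n t = a (int (Suc n)) t + a (- int (Suc n)) t" for n t
  define b' where "b' n t = a (int (Suc n)) t * (\<delta> * hs \<nu> (\<delta>*t) (w (int (Suc n))))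
      + a (- int (Suc n)) t * (\<delta> * hs \<nu> (\<delta>*t) (w (- int (Suc n))))" for n t
  define z where "z n = inverse (real (Suc n) ^ 2)" for n
  define Z where "Z = (\<Sum>n. z n)"
  define R where "R t = (\<Sum>n. b n t)" for t
  have zs: "summable z"
    using inverse_power_summable[of 2, where 'a=real] unfolding z_def
    by (subst summable_Suc_iff) simp
  have z0: "z n \<ge> 0" for n unfolding z_def by simp
  have a_nn: "a k t \<ge> 0" if "t > 0" for k t
    unfolding a_def using gstar_nonneg[OF nu0, of "\<delta>*t"] d that by simp
  have a_dec: "a k t \<le> C_nu \<nu> * (\<delta>*t) powr (2*\<nu>) / (of_int k)\<^sup>2" if "t > 0" "k \<noteq> 0" for k t
    unfolding a_def w_def using decay[OF nu _ l that(2), of "\<delta>*t"] d that by simp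
  have b_nn: "b n t \<ge> 0" if "t > 0" for n t unfolding b_def using a_nn[OF that] by (simp add: add_nonneg_nonneg)
  have b_bd: "b n t \<le> 2 * C_nu \<nu> * (\<delta>*t) powr (2*\<nu>) * z n" if "t > 0" for n t
  proof -
    have "a (int (Suc n)) t \<le> C_nu \<nu> * (\<delta>*t) powr (2*\<nu>) * z n"
      using a_dec[OF that, of "int (Suc n)"] unfolding z_def by (simp add: divide_inverse del: of_nat_Suc)
    moreover have "a (- int (Suc n)) t \<le> C_nu \<nu> * (\<delta>*t) powr (2*\<nu>) * z n"
      using a_dec[OF that, of "- int (Suc n)"] unfolding z_def by (simp add: divide_inverse del: of_nat_Suc)
    ultimately show ?thesis unfolding b_def by linarith
  qed
  have b_sum: "summable (\<lambda>n. b n t)" if "t > 0" for t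
    by (rule summable_comparison_test'[where g="\<lambda>n. 2 * C_nu \<nu> * (\<delta>*t) powr (2*\<nu>) * z n" and N=0])
       (use zs b_bd[OF that] b_nn[OF that] in \<open>auto intro: summable_mult\<close>)
  have G: "gdelta \<nu> \<delta> t l = a 0 t + R t" if "t > 0" for t
  proof -
    have "((\<lambda>k. a k t) has_sum (a 0 t + R t)) UNIV"
      unfolding R_def b_def by (rule int_split) (use a_nn[OF that] b_sum[OF that] in \<open>auto simp: b_def\<close>)
    then show ?thesis unfolding gdelta_def a_def w_def by (rule infsumI)
  qed
  have R_nn: "R t \<ge> 0" if "t > 0" for t unfolding R_def using b_sum[OF that] b_nn[OF that] by (simp add: suminf_nonneg)
  have R_bd: "R \<theta> \<le> (2 * C_nu \<nu> * \<theta>hi powr (2*\<nu>) * Z) * \<delta> powr (2*\<nu>)"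
  proof -
    have "R \<theta> \<le> (\<Sum>n. 2 * C_nu \<nu> * (\<delta>*\<theta>) powr (2*\<nu>) * z n)"
      unfolding R_def using b_bd[OF th0] b_sum[OF th0] zs by (intro suminf_le summable_mult) auto
    also have "\<dots> = 2 * C_nu \<nu> * (\<delta>*\<theta>) powr (2*\<nu>) * Z" unfolding Z_def using zs by (rule suminf_mult)
    also have "\<dots> \<le> 2 * C_nu \<nu> * (\<delta> powr (2*\<nu>) * \<theta>hi powr (2*\<nu>)) * Z"
      using Cp zs z0 d th0 lo nu0 unfolding Z_def
      by (intro mult_right_mono mult_left_mono suminf_nonneg) (auto simp: powr_mult intro: powr_mono2)
    finally show ?thesis by (simp add: algebra_simps)
  qed
  have a0: "a 0 t = gstar \<nu> (\<delta>*t) l" for t unfolding a_def w_def by simp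
  have gpos: "a 0 \<theta> > 0" unfolding a0 using gstar_pos[OF nu0, of "\<delta>*\<theta>"] d th0 by simp
  have part12: "gstar \<nu> (\<delta>*\<theta>) l \<le> gdelta \<nu> \<delta> \<theta> l
     \<and> gdelta \<nu> \<delta> \<theta> l \<le> gstar \<nu> (\<delta>*\<theta>) l + (2 * C_nu \<nu> * \<theta>hi powr (2*\<nu>) * Z) * \<delta> powr (2*\<nu>)"
    using G[OF th0] R_nn[OF th0] R_bd a0 by simp
  define q where "q t = (4*\<nu>+1)/t" for t
  have dh: "\<bar>\<delta> * hs \<nu> (\<delta>*t) \<omega>\<bar> \<le> q t" if "t > 0" for t \<omega>
  proof -
    have "\<bar>\<delta> * hs \<nu> (\<delta>*t) \<omega>\<bar> \<le> \<delta> * ((4*\<nu>+1)/(\<delta>*t))"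
      using mult_left_mono[OF hs_bound[of \<nu> "\<delta>*t" \<omega>], of \<delta>] nu0 d that by (simp add: abs_mult)
    also have "\<dots> = q t" unfolding q_def using d by simp
    finally show ?thesis .
  qed
  have a_der: "((\<lambda>t. a k t) has_real_derivative a k t * (\<delta> * hs \<nu> (\<delta>*t) (w k))) (at t)" if "t > 0" for k t
  proof -
    have "((\<lambda>t. \<delta>*t) has_real_derivative \<delta>) (at t)" by (auto intro!: derivative_eq_intros)
    from DERIV_chain2[OF gstar_deriv[OF nu0, of "\<delta>*t" "w k"] this] d that
    show ?thesis unfolding a_def by (simp add: mult_pos_pos algebra_simps)
  qed
  define S where "S = {\<theta>lo/2 <..< 2*\<theta>hi}"
  have S_pos: "t > 0" if "t \<in> S" for t using that lo unfolding S_def by auto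
  have thS: "\<theta> \<in> S" unfolding S_def using lo by auto
  have b_der: "((\<lambda>t. b n t) has_field_derivative b' n t) (at t within S)" if "t \<in> S" for n t
    unfolding b_def b'_def
    by (rule has_field_derivative_at_within, rule DERIV_add) (auto intro!: a_der S_pos[OF that])
  have b'_bd: "\<bar>b' n t\<bar> \<le> q t * b n t" if "t > 0" for n t
  proof -
    have "\<bar>b' n t\<bar> \<le> a (int (Suc n)) t * \<bar>\<delta> * hs \<nu> (\<delta>*t) (w (int (Suc n)))\<bar>
        + a (- int (Suc n)) t * \<bar>\<delta> * hs \<nu> (\<delta>*t) (w (- int (Suc n)))\<bar>"
      unfolding b'_def using a_nn[OF that]
      by (metis (no_types, lifting) abs_mult abs_of_nonneg abs_triangle_ineq)
    also have "\<dots> \<le> a (int (Suc n)) t * q t + a (- int (Suc n)) t * q t"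
      using a_nn[OF that] dh[OF that] by (intro add_mono mult_left_mono) auto
    finally show ?thesis unfolding b_def by (simp add: algebra_simps)
  qed
  have unif: "uniformly_convergent_on S (\<lambda>n t. \<Sum>i<n. b' i t)"
  proof (rule Weierstrass_m_test'[where M="\<lambda>n. q (\<theta>lo/2) * (2 * C_nu \<nu> * (\<delta>*(2*\<theta>hi)) powr (2*\<nu>) * z n)"])
    show "summable (\<lambda>n. q (\<theta>lo/2) * (2 * C_nu \<nu> * (\<delta>*(2*\<theta>hi)) powr (2*\<nu>) * z n))"
      using zs by (intro summable_mult)
  next
    fix n t assume t: "t \<in> S"
    have tp: "t > 0" using S_pos[OF t] .
    have "norm (b' n t) \<le> q t * b n t" using b'_bd[OF tp] by simp
    also have "\<dots> \<le> q (\<theta>lo/2) * b n t"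
      using t b_nn[OF tp] lo nu0 unfolding S_def q_def
      by (intro mult_right_mono divide_left_mono) auto
    also have "\<dots> \<le> q (\<theta>lo/2) * (2 * C_nu \<nu> * (\<delta>*(2*\<theta>hi)) powr (2*\<nu>) * z n)"
    proof (intro mult_left_mono)
      have "b n t \<le> 2 * C_nu \<nu> * (\<delta>*t) powr (2*\<nu>) * z n" by (rule b_bd[OF tp])
      also have "\<dots> \<le> 2 * C_nu \<nu> * (\<delta>*(2*\<theta>hi)) powr (2*\<nu>) * z n"
        using t d tp Cp z0 nu0 unfolding S_def
        by (intro mult_right_mono mult_left_mono powr_mono2) auto
      finally show "b n t \<le> 2 * C_nu \<nu> * (\<delta>*(2*\<theta>hi)) powr (2*\<nu>) * z n" .
      show "0 \<le> q (\<theta>lo/2)" unfolding q_def using lo nu0 by simp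
    qed
    finally show "norm (b' n t) \<le> q (\<theta>lo/2) * (2 * C_nu \<nu> * (\<delta>*(2*\<theta>hi)) powr (2*\<nu>) * z n)" .
  qed
  have intS: "\<theta> \<in> interior S" unfolding S_def using thS unfolding S_def by simp
  have R_der: "(R has_field_derivative (\<Sum>n. b' n \<theta>)) (at \<theta>)"
    unfolding R_def R_def[abs_def]
    by (rule has_field_derivative_series'(2)[OF _ b_der unif thS b_sum[OF th0] intS]) (auto simp: S_def)
  have absb': "summable (\<lambda>n. \<bar>b' n \<theta>\<bar>)"
    by (rule summable_comparison_test'[where g="\<lambda>n. q \<theta> * b n \<theta>" and N=0])
       (use b'_bd[OF th0] b_sum[OF th0] in \<open>auto intro: summable_mult\<close>)
  have R'_bd: "\<bar>\<Sum>n. b' n \<theta>\<bar> \<le> q \<theta> * R \<theta>"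
  proof -
    have "\<bar>\<Sum>n. b' n \<theta>\<bar> \<le> (\<Sum>n. \<bar>b' n \<theta>\<bar>)" by (rule summable_rabs[OF absb'])
    also have "\<dots> \<le> (\<Sum>n. q \<theta> * b n \<theta>)"
      using absb' b'_bd[OF th0] b_sum[OF th0] by (intro suminf_le summable_mult) auto
    also have "\<dots> = q \<theta> * R \<theta>" unfolding R_def using b_sum[OF th0] by (rule suminf_mult)
    finally show ?thesis .
  qed
  define p where "p = \<delta> * hs \<nu> (\<delta>*\<theta>) l"
  have ev: "eventually (\<lambda>t. ln (gdelta \<nu> \<delta> t l) = ln (a 0 t + R t)) (nhds \<theta>)"
  proof -
    have "eventually (\<lambda>t. t \<in> {0<..}) (nhds \<theta>)" using th0 by (intro eventually_nhds_in_open) auto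
    then show ?thesis by eventually_elim (simp add: G)
  qed
  have Gpos: "a 0 \<theta> + R \<theta> > 0" using gpos R_nn[OF th0] by simp
  have "((\<lambda>t. ln (a 0 t + R t)) has_real_derivative (a 0 \<theta> * p + (\<Sum>n. b' n \<theta>)) / (a 0 \<theta> + R \<theta>)) (at \<theta>)"
    using a_der[OF th0, of 0] R_der Gpos unfolding p_def w_def
    by (auto intro!: derivative_eq_intros)
  hence hd: "hdelta \<nu> \<delta> \<theta> l = (a 0 \<theta> * p + (\<Sum>n. b' n \<theta>)) / (a 0 \<theta> + R \<theta>)"
    unfolding hdelta_def using deriv_cong_ev[OF ev refl] DERIV_imp_deriv by metis
  have hst: "\<delta> * hstar \<nu> (\<delta>*\<theta>) l = p" unfolding p_def using hstar_eq[OF nu0, of "\<delta>*\<theta>" l] d th0 by simp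
  have "gstar \<nu> (\<delta>*\<theta>) l * \<bar>hdelta \<nu> \<delta> \<theta> l - \<delta> * hstar \<nu> (\<delta>*\<theta>) l\<bar> \<le> 2 * q \<theta> * R \<theta>"
    unfolding hd hst a0[symmetric]
    by (rule fin_alg[OF gpos R_nn[OF th0] _ R'_bd]) (unfold p_def, rule dh[OF th0])
  also have "\<dots> \<le> 2 * ((4*\<nu>+1)/\<theta>lo) * ((2 * C_nu \<nu> * \<theta>hi powr (2*\<nu>) * Z) * \<delta> powr (2*\<nu>))"
  proof (intro mult_left_mono mult_mono R_bd)
    show "q \<theta> \<le> (4*\<nu>+1)/\<theta>lo" unfolding q_def using lo nu0 by (intro divide_left_mono) auto
  qed (use R_nn[OF th0] lo nu0 in \<open>auto simp: q_def\<close>)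
  finally show ?thesis using part12 unfolding Z_def z_def by (simp add: algebra_simps)
qed




lemma lowb:
  fixes \<nu> \<delta> \<theta>lo \<theta>hi \<theta> l :: real
  assumes nu: "\<nu> \<ge> 1/2" and d: "0 < \<delta>" "\<delta> \<le> 1" and lo: "0 < \<theta>lo" "\<theta>lo \<le> \<theta>" "\<theta> \<le> \<theta>hi"
    and l: "\<bar>l\<bar> \<le> pi"
  shows "C_nu \<nu> * \<theta>lo powr (2*\<nu>) * (\<theta>hi\<^sup>2 + pi\<^sup>2) powr (-(\<nu>+1/2)) * \<delta> powr (2*\<nu>) \<le> gstar \<nu> (\<delta>*\<theta>) l"
proof -
  have nu0: "\<nu> > 0" using nu by simp
  have Cp: "C_nu \<nu> > 0" using Cnu_pos[OF nu0] .
  have dt1: "0 < \<delta>*\<theta>" using d lo by simp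
  have "\<delta>*\<theta> \<le> 1*\<theta>" using d lo by (intro mult_right_mono) auto
  hence dt: "0 < \<delta>*\<theta>" "\<delta>*\<theta> \<le> \<theta>hi" using dt1 lo by linarith+
  have X0: "0 < (\<delta>*\<theta>)\<^sup>2 + l\<^sup>2" using dt(1) by (intro add_pos_nonneg) auto
  have "(\<delta>*\<theta>)\<^sup>2 \<le> \<theta>hi\<^sup>2" using dt by (intro power_mono) auto
  moreover have "l\<^sup>2 \<le> pi\<^sup>2" using l by (metis abs_ge_zero power2_abs power_mono)
  ultimately have XY: "(\<delta>*\<theta>)\<^sup>2 + l\<^sup>2 \<le> \<theta>hi\<^sup>2 + pi\<^sup>2" by linarith
  have p1: "(\<theta>hi\<^sup>2 + pi\<^sup>2) powr (-(\<nu>+1/2)) \<le> ((\<delta>*\<theta>)\<^sup>2 + l\<^sup>2) powr (-(\<nu>+1/2))"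
    using powr_mono2'[OF _ X0 XY, of "-(\<nu>+1/2)"] nu0 by simp
  have p2: "\<theta>lo powr (2*\<nu>) * \<delta> powr (2*\<nu>) \<le> (\<delta>*\<theta>) powr (2*\<nu>)"
    using lo d nu0 by (simp add: powr_mult powr_mono2 mult.commute mult_right_mono)
  have "C_nu \<nu> * \<theta>lo powr (2*\<nu>) * (\<theta>hi\<^sup>2 + pi\<^sup>2) powr (-(\<nu>+1/2)) * \<delta> powr (2*\<nu>)
      = C_nu \<nu> * (\<theta>lo powr (2*\<nu>) * \<delta> powr (2*\<nu>)) * (\<theta>hi\<^sup>2 + pi\<^sup>2) powr (-(\<nu>+1/2))" by simp
  also have "\<dots> \<le> C_nu \<nu> * (\<delta>*\<theta>) powr (2*\<nu>) * ((\<delta>*\<theta>)\<^sup>2 + l\<^sup>2) powr (-(\<nu>+1/2))"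
    using Cp p1 p2 by (intro mult_mono mult_left_mono) auto
  finally show ?thesis unfolding gstar_def .
qed

theorem lemma5p1:
  fixes \<nu> \<theta>lo \<theta>hi :: real
  assumes "\<nu> \<ge> 1/2" and "0 < \<theta>lo" and "\<theta>lo \<le> \<theta>hi"
  shows "\<exists>C>0. \<forall>\<delta> \<in> {0<..1}. \<forall>\<theta> \<in> {\<theta>lo..\<theta>hi}. \<forall>l \<in> {-pi..pi}.
           inverse C * \<delta> powr (2 * \<nu>) \<le> gstar \<nu> (\<delta> * \<theta>) l
         \<and> gstar \<nu> (\<delta> * \<theta>) l \<le> gdelta \<nu> \<delta> \<theta> l
         \<and> gdelta \<nu> \<delta> \<theta> l \<le> gstar \<nu> (\<delta> * \<theta>) l + C * \<delta> powr (2 * \<nu>)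
         \<and> gstar \<nu> (\<delta> * \<theta>) l * \<bar>hdelta \<nu> \<delta> \<theta> l - \<delta> * hstar \<nu> (\<delta> * \<theta>) l\<bar>
             \<le> C * \<delta> powr (2 * \<nu>)"
proof -
  have nu0: "\<nu> > 0" using assms by simp
  define c where "c = C_nu \<nu> * \<theta>lo powr (2*\<nu>) * (\<theta>hi\<^sup>2 + pi\<^sup>2) powr (-(\<nu>+1/2))"
  define K where "K = 2 * C_nu \<nu> * \<theta>hi powr (2*\<nu>) * (\<Sum>n. inverse (real (Suc n) ^ 2))"
  define C where "C = max (inverse c) (K * (1 + 2*((4*\<nu>+1)/\<theta>lo)))"
  have cp: "c > 0" unfolding c_def using Cnu_pos[OF nu0] assms by (simp add: add_pos_nonneg)
  have zs: "summable (\<lambda>n. inverse (real (Suc n) ^ 2))"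
    using inverse_power_summable[of 2, where 'a=real] by (subst summable_Suc_iff) simp
  have K0: "K \<ge> 0" unfolding K_def using Cnu_pos[OF nu0] zs by (intro mult_nonneg_nonneg suminf_nonneg) auto
  have Cp: "C > 0" unfolding C_def using cp by (simp add: less_max_iff_disj)
  have iC: "inverse C \<le> c" unfolding C_def using cp
    by (metis inverse_inverse_eq inverse_positive_iff_positive le_imp_inverse_le max.cobounded1)
  have q0: "0 \<le> (4*\<nu>+1)/\<theta>lo" using nu0 assms by simp
  have KC: "K \<le> C" unfolding C_def using K0 q0
    by (metis (no_types, lifting) le_add_same_cancel1 max.coboundedI2 mult_left_mono mult_nonneg_nonneg mult.right_neutral zero_le_numeral)
  have KC2: "2*((4*\<nu>+1)/\<theta>lo) * K \<le> C" unfolding C_def using K0 q0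
    by (simp add: max.coboundedI2 algebra_simps)
  show ?thesis
  proof (intro exI[of _ C] conjI Cp ballI)
    fix \<delta> \<theta> l :: real assume d: "\<delta> \<in> {0<..1}" and t: "\<theta> \<in> {\<theta>lo..\<theta>hi}" and l: "l \<in> {-pi..pi}"
    have l': "\<bar>l\<bar> \<le> pi" using l by auto
    have dp: "\<delta> powr (2*\<nu>) \<ge> 0" by simp
    have P: "gstar \<nu> (\<delta>*\<theta>) l \<le> gdelta \<nu> \<delta> \<theta> l
     \<and> gdelta \<nu> \<delta> \<theta> l \<le> gstar \<nu> (\<delta>*\<theta>) l + K * \<delta> powr (2*\<nu>)
     \<and> gstar \<nu> (\<delta>*\<theta>) l * \<bar>hdelta \<nu> \<delta> \<theta> l - \<delta> * hstar \<nu> (\<delta>*\<theta>) l\<bar>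
        \<le> 2*((4*\<nu>+1)/\<theta>lo) * K * \<delta> powr (2*\<nu>)"
      unfolding K_def using point[OF assms(1) _ assms(2) _ _ l', of \<delta> \<theta> \<theta>hi] d t by auto
    have L: "c * \<delta> powr (2*\<nu>) \<le> gstar \<nu> (\<delta>*\<theta>) l"
      unfolding c_def using lowb[OF assms(1) _ _ assms(2) _ _ l', of \<delta> \<theta> \<theta>hi] d t by auto
    show "inverse C * \<delta> powr (2 * \<nu>) \<le> gstar \<nu> (\<delta> * \<theta>) l"
      using L mult_right_mono[OF iC dp] by linarith
    show "gstar \<nu> (\<delta> * \<theta>) l \<le> gdelta \<nu> \<delta> \<theta> l" using P by simp
    show "gdelta \<nu> \<delta> \<theta> l \<le> gstar \<nu> (\<delta> * \<theta>) l + C * \<delta> powr (2 * \<nu>)"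
      using P mult_right_mono[OF KC dp] by linarith
    show "gstar \<nu> (\<delta> * \<theta>) l * \<bar>hdelta \<nu> \<delta> \<theta> l - \<delta> * hstar \<nu> (\<delta> * \<theta>) l\<bar> \<le> C * \<delta> powr (2 * \<nu>)"
      using P mult_right_mono[OF KC2 dp] by linarith
  qed
qed


end
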